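(* Let $\mathcal{D}\subset\mathbb{R}^N$ be open, bounded, connected. If $y_0\in\partial\mathcal{D}$ is not walk-regular, then there exists a continuous function $F:\partial\mathcal{D}\to\mathbb{R}$ such that the functions $u^\epsilon(x)=\mathbb{E}[F\circ X^{\epsilon,x}]$ satisfy $\limsup_{x\to y_0,\,\epsilon\to0}u^\epsilon(x)\ne F(y_0)$.
   Context: Probability space: $\Omega_1=B_1(0)\subset\mathbb{R}^N$ with Borel $\sigma$-algebra and normalised Lebesgue measure; $(\Omega,\mathcal{F},\mathbb{P})$ is the countable product $\Omega=(\Omega_1)^{\mathbb{N}}$, $\omega=\{w_i\}_{i\ge1}$. The $\epsilon$-ball walk started at $x\in\mathcal{D}$: $X_0^{\epsilon,x}\equiv x$, $X_n^{\epsilon,x}=X_{n-1}^{\epsilon,x}+\big(\epsilon\wedge\operatorname{dist}(X_{n-1}^{\epsilon,x},\partial\mathcal{D})\big)w_n$ for $n\ge1$; it converges $\mathbb{P}$-a.s. to a random variable $X^{\epsilon,x}:\Omega\to\partial\mathcal{D}$. A point $y_0\in\partial\mathcal{D}$ is walk-regular if for every $\eta,\delta>0$ there exist $\hat\delta\in(0,\delta)$ and $\hat\epsilon\in(0,1)$ such that $\mathbb{P}(X^{\epsilon,x_0}\in B_\delta(y_0))\ge1-\eta$ for all $\epsilon\in(0,\hat\epsilon)$ and all $x_0\in B_{\hat\delta}(y_0)\cap\mathcal{D}$. *)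

theory Defs
  imports "HOL-Probability.Probability"
begin

text \<open>Probability space: countable product of the normalised Lebesgue measure
on the unit ball. A sample is \<omega> :: nat \<Rightarrow> 'a; the paper's w_i (i \<ge> 1) is \<omega> (i - 1).\<close>

definition walk_space :: "(nat \<Rightarrow> 'a::euclidean_space) measure" where
  "walk_space = PiM UNIV (\<lambda>_. uniform_measure lborel (ball 0 1))"

fun ball_walk :: "'a::euclidean_space set \<Rightarrow> real \<Rightarrow> 'a \<Rightarrow> nat \<Rightarrow> (nat \<Rightarrow> 'a) \<Rightarrow> 'a" where
  "ball_walk D \<epsilon> x 0 \<omega> = x"
| "ball_walk D \<epsilon> x (Suc n) \<omega> =
     ball_walk D \<epsilon> x n \<omega> + min \<epsilon> (infdist (ball_walk D \<epsilon> x n \<omega>) (frontier D)) *\<^sub>R \<omega> n"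

text \<open>The (almost surely existing) limit X^{eps,x} of the walk.\<close>

definition walk_limit :: "'a::euclidean_space set \<Rightarrow> real \<Rightarrow> 'a \<Rightarrow> (nat \<Rightarrow> 'a) \<Rightarrow> 'a" where
  "walk_limit D \<epsilon> x \<omega> = lim (\<lambda>n. ball_walk D \<epsilon> x n \<omega>)"

definition walk_regular :: "'a::euclidean_space set \<Rightarrow> 'a \<Rightarrow> bool" where
  "walk_regular D y0 \<longleftrightarrow>
     (\<forall>\<eta>>0. \<forall>\<delta>>0. \<exists>\<delta>'. 0 < \<delta>' \<and> \<delta>' < \<delta> \<and> (\<exists>\<epsilon>'. 0 < \<epsilon>' \<and> \<epsilon>' < 1 \<and>
        (\<forall>\<epsilon>. 0 < \<epsilon> \<and> \<epsilon> < \<epsilon>' \<longrightarrow> (\<forall>x0 \<in> ball y0 \<delta>' \<inter> D.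
           measure walk_space {\<omega> \<in> space walk_space. walk_limit D \<epsilon> x0 \<omega> \<in> ball y0 \<delta>} \<ge> 1 - \<eta>))))"

definition walk_value :: "'a::euclidean_space set \<Rightarrow> ('a \<Rightarrow> real) \<Rightarrow> real \<Rightarrow> 'a \<Rightarrow> real" where
  "walk_value D F \<epsilon> x = (\<integral>\<omega>. F (walk_limit D \<epsilon> x \<omega>) \<partial>walk_space)"

end

theory Submission
  imports Defs
begin

lemma walk_space_prob: "prob_space (walk_space :: (nat \<Rightarrow> 'a::euclidean_space) measure)"
proof -
  have f: "emeasure lborel (ball (0::'a) 1) \<noteq> \<infinity>"
    using emeasure_lborel_ball_finite[of "0::'a" 1] by auto
  have p: "measure lborel (ball (0::'a) 1) > 0" using content_ball_pos[of 1 "0::'a"] by simp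
  have "emeasure lborel (ball (0::'a) 1) = ennreal (measure lborel (ball (0::'a) 1))"
    using f by (intro emeasure_eq_ennreal_measure) auto
  with p have "emeasure lborel (ball (0::'a) 1) \<noteq> 0" by simp
  with f have "prob_space (uniform_measure lborel (ball (0::'a) 1))"
    by (intro prob_space_uniform_measure) auto
  then show ?thesis unfolding walk_space_def by (intro prob_space_PiM) auto
qed

lemma ball_walk_meas:
  "(\<lambda>\<omega>. ball_walk D \<epsilon> x n \<omega>) \<in> borel_measurable (walk_space :: (nat \<Rightarrow> 'a::euclidean_space) measure)"
proof (induction n)
  case 0
  then show ?case by simp
next
  case (Suc n)
  have c: "(\<lambda>\<omega>. \<omega> n) \<in> borel_measurable (walk_space :: (nat \<Rightarrow> 'a) measure)"
  proof -
    have "(\<lambda>\<omega>. \<omega> n) \<in> measurable (walk_space :: (nat \<Rightarrow> 'a) measure) (uniform_measure lborel (ball (0::'a) 1))"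
      unfolding walk_space_def by (rule measurable_component_singleton) auto
    moreover have "measurable (walk_space :: (nat \<Rightarrow> 'a) measure) (uniform_measure lborel (ball (0::'a) 1)) = measurable (walk_space :: (nat \<Rightarrow> 'a) measure) borel"
      by (rule measurable_cong_sets) auto
    ultimately show ?thesis by simp
  qed
  have i: "(\<lambda>\<omega>. infdist (ball_walk D \<epsilon> x n \<omega>) (frontier D)) \<in> borel_measurable (walk_space :: (nat \<Rightarrow> 'a) measure)"
    by (rule measurable_compose[OF Suc.IH borel_measurable_continuous_onI])
       (intro continuous_intros)
  show ?case using Suc.IH c i by simp
qed

lemma walk_limit_meas:
  "walk_limit D \<epsilon> x \<in> borel_measurable (walk_space :: (nat \<Rightarrow> 'a::euclidean_space) measure)"
  unfolding walk_limit_def[abs_def]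
  by (rule borel_measurable_lim_metric[OF ball_walk_meas])

lemma value_bound:
  fixes D :: "'a::euclidean_space set" and y0 :: 'a
  assumes "\<delta> > 0"
    and m: "measure walk_space {\<omega> \<in> space walk_space. walk_limit D \<epsilon> x0 \<omega> \<in> ball y0 \<delta>} < 1 - \<eta>"
  shows "walk_value D (\<lambda>y. min 1 (dist y0 y / \<delta>)) \<epsilon> x0 > \<eta>"
proof -
  interpret P: prob_space "walk_space :: (nat \<Rightarrow> 'a) measure" by (rule walk_space_prob)
  let ?S = "{\<omega> \<in> space walk_space. walk_limit D \<epsilon> x0 \<omega> \<in> ball y0 \<delta>}"
  let ?F = "\<lambda>y. min 1 (dist y0 y / \<delta>)"
  have lm: "walk_limit D \<epsilon> x0 \<in> borel_measurable walk_space" by (rule walk_limit_meas)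
  have S: "?S \<in> sets walk_space"
  proof -
    have "?S = walk_limit D \<epsilon> x0 -` ball y0 \<delta> \<inter> space walk_space" by auto
    also have "\<dots> \<in> sets walk_space" by (rule measurable_sets[OF lm]) auto
    finally show ?thesis .
  qed
  have C: "space walk_space - ?S \<in> sets walk_space" using S by auto
  have Fm: "(\<lambda>\<omega>. ?F (walk_limit D \<epsilon> x0 \<omega>)) \<in> borel_measurable walk_space"
    using lm by measurable
  have Fi: "integrable walk_space (\<lambda>\<omega>. ?F (walk_limit D \<epsilon> x0 \<omega>))"
    by (rule P.integrable_const_bound[where B=1]) (use Fm \<open>\<delta> > 0\<close> in auto)
  have Ii: "integrable walk_space (indicator (space walk_space - ?S) :: _ \<Rightarrow> real)"
    using C by (intro integrable_real_indicator) (auto simp: P.emeasure_eq_measure)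
  have "measure walk_space (space walk_space - ?S) = integral\<^sup>L walk_space (indicator (space walk_space - ?S))"
    using C by simp
  also have "\<dots> \<le> walk_value D ?F \<epsilon> x0"
    unfolding walk_value_def
  proof (rule integral_mono[OF Ii Fi])
    fix \<omega> :: "nat \<Rightarrow> 'a" assume "\<omega> \<in> space walk_space"
    show "(indicator (space walk_space - ?S) \<omega> :: real) \<le> ?F (walk_limit D \<epsilon> x0 \<omega>)"
      using \<open>\<delta> > 0\<close> by (auto simp: indicator_def field_simps)
  qed
  finally have "measure walk_space (space walk_space - ?S) \<le> walk_value D ?F \<epsilon> x0" .
  moreover have "measure walk_space (space walk_space - ?S) = 1 - measure walk_space ?S"
    using S by (rule P.prob_compl)
  ultimately show ?thesis using m by linarith
qed

theorem lemma2p15: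
  fixes D :: "'a::euclidean_space set" and y0 :: 'a
  assumes "open D" and "bounded D" and "connected D"
    and "y0 \<in> frontier D"
    and "\<not> walk_regular D y0"
  shows "\<exists>F :: 'a \<Rightarrow> real. continuous_on (frontier D) F \<and>
           Limsup (at (y0, 0) within (D \<times> {0<..})) (\<lambda>(x, \<epsilon>). ereal (walk_value D F \<epsilon> x))
             \<noteq> ereal (F y0)"
proof -
  from assms(5) obtain \<eta> \<delta> where h\<eta>: "\<eta> > 0" and h\<delta>: "\<delta> > 0" and
    bad: "\<And>\<delta>' \<epsilon>'. 0 < \<delta>' \<Longrightarrow> \<delta>' < \<delta> \<Longrightarrow> 0 < \<epsilon>' \<Longrightarrow> \<epsilon>' < 1 \<Longrightarrow>
      \<exists>\<epsilon>. 0 < \<epsilon> \<and> \<epsilon> < \<epsilon>' \<and> (\<exists>x0 \<in> ball y0 \<delta>' \<inter> D.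
           measure walk_space {\<omega> \<in> space walk_space. walk_limit D \<epsilon> x0 \<omega> \<in> ball y0 \<delta>} < 1 - \<eta>)"
    unfolding walk_regular_def by (auto simp: not_le)
  define F where "F = (\<lambda>y. min 1 (dist y0 y / \<delta>))"
  have cont: "continuous_on (frontier D) F"
    unfolding F_def using h\<delta> by (intro continuous_intros) auto
  let ?f = "(\<lambda>(x, \<epsilon>). ereal (walk_value D F \<epsilon> x))"
  have "ereal \<eta> \<le> Limsup (at (y0, 0) within (D \<times> {0<..})) ?f"
    unfolding Limsup_def
  proof (rule INF_greatest)
    fix P assume "P \<in> {P. eventually P (at (y0, 0::real) within (D \<times> {0<..}))}"
    then obtain d where d: "d > 0" and dP: "\<And>z. z \<in> D \<times> {0<..} \<Longrightarrow> z \<noteq> (y0, 0) \<Longrightarrow> dist z (y0, 0) < d \<Longrightarrow> P z"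
      unfolding eventually_at by auto
    obtain \<epsilon> x0 where e: "0 < \<epsilon>" "\<epsilon> < min (1/2) (d/2)" and x0: "x0 \<in> ball y0 (min (\<delta>/2) (d/2))" "x0 \<in> D"
      and m: "measure walk_space {\<omega> \<in> space walk_space. walk_limit D \<epsilon> x0 \<omega> \<in> ball y0 \<delta>} < 1 - \<eta>"
    proof -
      have "min (\<delta>/2) (d/2) < \<delta>" "min (1/2) (d/2) < (1::real)" using h\<delta> d by auto
      then show ?thesis using bad[of "min (\<delta>/2) (d/2)" "min (1/2) (d/2)"] h\<delta> d that by fastforce
    qed
    have "dist (x0, \<epsilon>) (y0, 0) < d"
      unfolding dist_Pair_Pair
      by (rule sqrt_sum_squares_half_less) (use e x0 in \<open>auto simp: dist_commute\<close>)
    then have "P (x0, \<epsilon>)" using e x0 by (intro dP) auto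
    moreover have "walk_value D F \<epsilon> x0 > \<eta>"
      unfolding F_def by (rule value_bound[OF h\<delta> m])
    ultimately show "ereal \<eta> \<le> (SUP z\<in>{z. P z}. ?f z)"
      by (intro SUP_upper2[of "(x0, \<epsilon>)"]) auto
  qed
  moreover have "F y0 = 0" unfolding F_def by simp
  ultimately show ?thesis using cont h\<eta> by (intro exI[of _ F]) auto
qed

end
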